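(* For any positive integer $T$, $x \in \{0,1\}^T$ and $p \in [0,1]^T$, $\mathsf{CalDist}(x,p) \le \mathsf{ECE}(x,p)$.
   Context: $\mathsf{ECE}(x,p) = \sum_{\alpha \in [0,1]} \left|\sum_{t=1}^T (x_t - p_t)\mathbf{1}[p_t = \alpha]\right|$ (only finitely many nonzero summands). For $x \in \{0,1\}^T$, let $\mathcal{C}(x) = \{q \in [0,1]^T : \sum_{t=1}^T (x_t - q_t)\mathbf{1}[q_t = \alpha] = 0 \text{ for all } \alpha \in [0,1]\}$ and $\mathsf{CalDist}(x,p) = \min_{q \in \mathcal{C}(x)} \|p-q\|_1$. *)

theory Defs
  imports "HOL-Analysis.Analysis"
begin

text \<open>Sequences of length T are modelled as functions nat => real, indexed by {1..T}.\<close>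

definition ECE :: "nat \<Rightarrow> (nat \<Rightarrow> real) \<Rightarrow> (nat \<Rightarrow> real) \<Rightarrow> real" where
  "ECE T x p = (\<Sum>\<alpha>\<in>p ` {1..T}. \<bar>\<Sum>t=1..T. (x t - p t) * (if p t = \<alpha> then 1 else 0)\<bar>)"

definition calibrated_set :: "nat \<Rightarrow> (nat \<Rightarrow> real) \<Rightarrow> (nat \<Rightarrow> real) set" where
  "calibrated_set T x = {q. (\<forall>t\<in>{1..T}. q t \<in> {0..1}) \<and>
      (\<forall>\<alpha>\<in>{0..1::real}. (\<Sum>t=1..T. (x t - q t) * (if q t = \<alpha> then 1 else 0)) = 0)}"

definition l1_dist :: "nat \<Rightarrow> (nat \<Rightarrow> real) \<Rightarrow> (nat \<Rightarrow> real) \<Rightarrow> real" where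
  "l1_dist T p q = (\<Sum>t=1..T. \<bar>p t - q t\<bar>)"

definition CalDist :: "nat \<Rightarrow> (nat \<Rightarrow> real) \<Rightarrow> (nat \<Rightarrow> real) \<Rightarrow> real" where
  "CalDist T x p = Inf (l1_dist T p ` calibrated_set T x)"

end

theory Submission
  imports Defs
begin

lemma sum_ind_filter:
  fixes f :: "nat \<Rightarrow> real"
  assumes "finite A"
  shows "(\<Sum>t\<in>A. f t * (if g t = b then 1 else 0)) = (\<Sum>t\<in>{t\<in>A. g t = b}. f t)"
  using assms by (simp add: sum.inter_filter[symmetric] if_distrib cong: if_cong)

theorem proposition3:
  fixes T :: nat and x p :: "nat \<Rightarrow> real"
  assumes "T \<ge> 1"
    and "\<forall>t\<in>{1..T}. x t \<in> {0, 1}"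
    and "\<forall>t\<in>{1..T}. p t \<in> {0..1}"
  shows "CalDist T x p \<le> ECE T x p"
proof -
  define A where "A = {1..T}"
  have finA: "finite A" by (simp add: A_def)
  define S where "S \<alpha> = {s\<in>A. p s = \<alpha>}" for \<alpha>
  define m where "m \<alpha> = (\<Sum>s\<in>S \<alpha>. x s) / real (card (S \<alpha>))" for \<alpha>
  define q where "q t = m (p t)" for t
  have finS: "finite (S \<alpha>)" for \<alpha> using finA by (simp add: S_def)
  have x01: "0 \<le> x t \<and> x t \<le> 1" if "t \<in> A" for t proof -
    have "x t \<in> {0,1}" using assms(2) that by (simp add: A_def)
    then show ?thesis by auto
  qed
  have m01: "0 \<le> m \<alpha> \<and> m \<alpha> \<le> 1" for \<alpha>
  proof -
    have "0 \<le> (\<Sum>s\<in>S \<alpha>. x s)" by (rule sum_nonneg) (use x01 in \<open>auto simp: S_def\<close>)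
    moreover have "(\<Sum>s\<in>S \<alpha>. x s) \<le> (\<Sum>s\<in>S \<alpha>. 1)" by (rule sum_mono) (use x01 in \<open>auto simp: S_def\<close>)
    ultimately show ?thesis unfolding m_def
      by (cases "card (S \<alpha>) = 0") (auto simp: divide_le_eq)
  qed
  have zero: "(\<Sum>t\<in>S \<alpha>. x t - m \<alpha>) = 0" if "\<alpha> \<in> p ` A" for \<alpha>
  proof -
    have "S \<alpha> \<noteq> {}" using that by (auto simp: S_def)
    then have "card (S \<alpha>) \<noteq> 0" using finS by auto
    then show ?thesis by (simp add: sum_subtractf m_def)
  qed
  have cal: "q \<in> calibrated_set T x"
    unfolding calibrated_set_def
  proof (intro CollectI conjI ballI)
    fix t show "q t \<in> {0..1}" using m01 by (simp add: q_def)
  next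
    fix \<beta> :: real
    have "(\<Sum>t=1..T. (x t - q t) * (if q t = \<beta> then 1 else 0)) = (\<Sum>t\<in>{t\<in>A. q t = \<beta>}. x t - q t)"
      using finA by (simp add: sum_ind_filter A_def)
    also have "\<dots> = (\<Sum>\<alpha>\<in>p ` {t\<in>A. q t = \<beta>}. \<Sum>t\<in>{t'\<in>{t\<in>A. q t = \<beta>}. p t' = \<alpha>}. x t - q t)"
      by (rule sum.group[symmetric]) (use finA in auto)
    also have "\<dots> = (\<Sum>\<alpha>\<in>p ` {t\<in>A. q t = \<beta>}. \<Sum>t\<in>S \<alpha>. x t - m \<alpha>)"
    proof (rule sum.cong[OF refl])
      fix \<alpha> assume "\<alpha> \<in> p ` {t\<in>A. q t = \<beta>}"
      then have "{t'\<in>{t\<in>A. q t = \<beta>}. p t' = \<alpha>} = S \<alpha>" by (auto simp: S_def q_def)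
      then show "(\<Sum>t\<in>{t'\<in>{t\<in>A. q t = \<beta>}. p t' = \<alpha>}. x t - q t) = (\<Sum>t\<in>S \<alpha>. x t - m \<alpha>)"
        by (simp add: q_def S_def)
    qed
    also have "\<dots> = 0" by (rule sum.neutral) (use zero in auto)
    finally show "(\<Sum>t=1..T. (x t - q t) * (if q t = \<beta> then 1 else 0)) = 0" .
  qed
  have dist: "l1_dist T p q = ECE T x p"
  proof -
    have "l1_dist T p q = (\<Sum>t\<in>A. \<bar>p t - q t\<bar>)" by (simp add: l1_dist_def A_def)
    also have "\<dots> = (\<Sum>\<alpha>\<in>p ` A. \<Sum>t\<in>{t'\<in>A. p t' = \<alpha>}. \<bar>p t - q t\<bar>)"
      by (rule sum.group[symmetric]) (use finA in auto)
    also have "\<dots> = (\<Sum>\<alpha>\<in>p ` A. \<bar>\<Sum>t\<in>S \<alpha>. x t - \<alpha>\<bar>)"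
    proof (rule sum.cong[OF refl])
      fix \<alpha> assume a: "\<alpha> \<in> p ` A"
      have "(\<Sum>t\<in>{t'\<in>A. p t' = \<alpha>}. \<bar>p t - q t\<bar>) = (\<Sum>t\<in>S \<alpha>. \<bar>\<alpha> - m \<alpha>\<bar>)"
        by (rule sum.cong) (auto simp: S_def q_def)
      also have "\<dots> = \<bar>real (card (S \<alpha>)) * (\<alpha> - m \<alpha>)\<bar>" by (simp add: abs_mult)
      also have "real (card (S \<alpha>)) * (\<alpha> - m \<alpha>) = - (\<Sum>t\<in>S \<alpha>. x t - \<alpha>)"
      proof -
        have "S \<alpha> \<noteq> {}" using a by (auto simp: S_def)
        then have "card (S \<alpha>) \<noteq> 0" using finS by auto
        then show ?thesis by (simp add: sum_subtractf m_def algebra_simps)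
      qed
      finally show "(\<Sum>t\<in>{t'\<in>A. p t' = \<alpha>}. \<bar>p t - q t\<bar>) = \<bar>\<Sum>t\<in>S \<alpha>. x t - \<alpha>\<bar>" by simp
    qed
    also have "\<dots> = ECE T x p"
      unfolding ECE_def A_def[symmetric]
    proof (rule sum.cong[OF refl])
      fix \<alpha>
      have "(\<Sum>t\<in>A. (x t - p t) * (if p t = \<alpha> then 1 else 0)) = (\<Sum>t\<in>S \<alpha>. x t - p t)"
        using finA by (simp add: sum_ind_filter S_def)
      also have "\<dots> = (\<Sum>t\<in>S \<alpha>. x t - \<alpha>)" by (rule sum.cong) (auto simp: S_def)
      finally show "\<bar>\<Sum>t\<in>S \<alpha>. x t - \<alpha>\<bar> = \<bar>\<Sum>t\<in>A. (x t - p t) * (if p t = \<alpha> then 1 else 0)\<bar>" by simp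
    qed
    finally show ?thesis .
  qed
  have bdd: "bdd_below (l1_dist T p ` calibrated_set T x)"
    by (rule bdd_belowI[of _ 0]) (auto simp: l1_dist_def intro: sum_nonneg)
  have "CalDist T x p \<le> l1_dist T p q"
    unfolding CalDist_def by (rule cInf_lower) (use cal bdd in auto)
  then show ?thesis using dist by simp
qed

end
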